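(* Let $X$ be a separable infinite-dimensional Banach space over $\mathbb{K}\in\{\mathbb{R},\mathbb{C}\}$ and let $T_1,\dots,T_N\in B(X)$ with $N\ge 2$. Suppose there exist a strictly increasing sequence $(n_k)$ of positive integers, a dense subset $X_0$ of $X$, and maps $S_k:\oplus_{i=1}^N X_0\to X$ ($k\in\mathbb{N}$) such that: (i) for each $x\in X_0$ and each $1\le i\le N$, $T_i^{n_k}x\to 0$ as $k\to\infty$; (ii) for each $\epsilon>0$, each $K\in\mathbb{N}$ and all $x_1,\dots,x_N\in X_0$ there exists $k\ge K$ with (a) $\|S_k(x_1,\dots,x_N)\|<\epsilon$ and (b) $\|T_i^{n_k}S_k(x_1,\dots,x_N)-x_i\|<\epsilon$ for all $1\le i\le N$. Then $T_1,\dots,T_N$ satisfy the Strong Disjoint Blow-up/Collapse Property, and hence $T_1,\dots,T_N$ possess a dense d-hypercyclic manifold.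
   Context: $B(X)$ is the algebra of bounded linear operators on $X$. Operators $T_1,\dots,T_N$ satisfy the Strong Disjoint Blow-up/Collapse Property if for every $L\in\mathbb{N}$ and all non-empty open sets $W,U_{1-L},\dots,U_0,U_1,\dots,U_N$ of $X$ with $0\in W$ there is $n\in\mathbb{N}$ with $W\cap T_1^{-n}(U_1)\cap\cdots\cap T_N^{-n}(U_N)\ne\emptyset$ and $U_\ell\cap T_1^{-n}(W)\cap\cdots\cap T_N^{-n}(W)\neq\emptyset$ for all $1-L\le \ell\le 0$. A vector $x\in X$ is d-hypercyclic for $T_1,\dots,T_N$ if $\{(T_1^nx,\dots,T_N^nx):n\ge0\}$ is dense in $\oplus_{i=1}^N X$ (product topology). A dense d-hypercyclic manifold is a dense linear subspace of $X$ every nonzero vector of which is d-hypercyclic for $T_1,\dots,T_N$. *)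

theory Defs
  imports "HOL-Analysis.Analysis"
begin

text \<open>Scalar field K: either the reals (cplx = False) or the complex numbers
(cplx = True).  A complex Banach space is modelled as a real Banach space
together with the map J (multiplication by the imaginary unit), so that
(a + i b) x = a x + b (J x) and the norm is complex-homogeneous.\<close>

definition complex_structure :: "('a::real_normed_vector \<Rightarrow> 'a) \<Rightarrow> bool" where
  "complex_structure J \<longleftrightarrow> bounded_linear J \<and> (\<forall>x. J (J x) = - x) \<and>
     (\<forall>a b x. norm (a *\<^sub>R x + b *\<^sub>R J x) = sqrt (a\<^sup>2 + b\<^sup>2) * norm x)"

definition K_subspace :: "bool \<Rightarrow> ('a::real_vector \<Rightarrow> 'a) \<Rightarrow> 'a set \<Rightarrow> bool" where
  "K_subspace cplx J M \<longleftrightarrow> subspace M \<and> (cplx \<longrightarrow> J ` M \<subseteq> M)"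

definition K_bounded_linear :: "bool \<Rightarrow> ('a::real_normed_vector \<Rightarrow> 'a) \<Rightarrow> ('a \<Rightarrow> 'a) \<Rightarrow> bool" where
  "K_bounded_linear cplx J T \<longleftrightarrow> bounded_linear T \<and> (cplx \<longrightarrow> (\<forall>x. T (J x) = J (T x)))"

definition separable_X :: "'a::topological_space itself \<Rightarrow> bool" where
  "separable_X _ \<longleftrightarrow> (\<exists>D::'a set. countable D \<and> closure D = UNIV)"

definition infinite_dimensional :: "'a::real_vector itself \<Rightarrow> bool" where
  "infinite_dimensional _ \<longleftrightarrow> (\<forall>B::'a set. finite B \<longrightarrow> span B \<noteq> UNIV)"

definition strong_dbcp :: "(nat \<Rightarrow> 'a::real_normed_vector \<Rightarrow> 'a) \<Rightarrow> nat \<Rightarrow> bool" where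
  "strong_dbcp T N \<longleftrightarrow>
    (\<forall>(L::nat) (W::'a set) (U::int \<Rightarrow> 'a set).
       L \<ge> 1 \<longrightarrow> open W \<longrightarrow> 0 \<in> W \<longrightarrow>
       (\<forall>l\<in>{1 - int L .. int N}. open (U l) \<and> U l \<noteq> {}) \<longrightarrow>
       (\<exists>n::nat. n \<ge> 1 \<and>
          W \<inter> (\<Inter>i\<in>{1..N}. (T i ^^ n) -` U (int i)) \<noteq> {} \<and>
          (\<forall>l\<in>{1 - int L .. 0}. U l \<inter> (\<Inter>i\<in>{1..N}. (T i ^^ n) -` W) \<noteq> {})))"

text \<open>x is d-hypercyclic: the orbit (T_1^n x, ..., T_N^n x), n \<ge> 0, is dense
 in the N-fold product (product topology), i.e. meets every nonempty basic open set
 V_1 \<times> ... \<times> V_N.\<close>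
definition d_hypercyclic :: "(nat \<Rightarrow> 'a::topological_space \<Rightarrow> 'a) \<Rightarrow> nat \<Rightarrow> 'a \<Rightarrow> bool" where
  "d_hypercyclic T N x \<longleftrightarrow>
    (\<forall>V::nat \<Rightarrow> 'a set. (\<forall>i\<in>{1..N}. open (V i) \<and> V i \<noteq> {}) \<longrightarrow>
       (\<exists>n::nat. \<forall>i\<in>{1..N}. (T i ^^ n) x \<in> V i))"

definition dense_d_hypercyclic_manifold ::
  "bool \<Rightarrow> ('a::real_normed_vector \<Rightarrow> 'a) \<Rightarrow> (nat \<Rightarrow> 'a \<Rightarrow> 'a) \<Rightarrow> nat \<Rightarrow> 'a set \<Rightarrow> bool" where
  "dense_d_hypercyclic_manifold cplx J T N M \<longleftrightarrow>
    K_subspace cplx J M \<and> closure M = UNIV \<and> (\<forall>x\<in>M. x \<noteq> 0 \<longrightarrow> d_hypercyclic T N x)"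

end

theory Submission
  imports Defs
begin


lemma dense_pt:
  fixes X0 :: "'a::metric_space set"
  assumes "closure X0 = UNIV" "e > 0"
  shows "\<exists>z\<in>X0. dist z x < e"
proof -
  have "x \<in> closure X0" using assms(1) by simp
  then show ?thesis unfolding closure_approachable using assms(2) by blast
qed

lemma open_ne_X0:
  fixes X0 :: "'a::metric_space set"
  assumes "closure X0 = UNIV" "open U" "U \<noteq> {}"
  shows "\<exists>z\<in>X0. z \<in> U"
proof -
  obtain x where x: "x \<in> U" using assms by auto
  then obtain e where e: "e > 0" "ball x e \<subseteq> U" using assms(2) unfolding open_contains_ball by blast
  then obtain z where z: "z \<in> X0" "dist z x < e" using dense_pt[OF assms(1) e(1)] by blast
  then have "z \<in> ball x e" by (simp add: dist_commute)
  then show ?thesis using e(2) z(1) by blast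
qed

lemma bl_funpow: fixes f :: "'a::real_normed_vector \<Rightarrow> 'a" shows "bounded_linear f \<Longrightarrow> bounded_linear (f ^^ n)"
proof (induction n)
  case 0 have e: "f ^^ 0 = (\<lambda>x. x)" by (simp add: id_def)
  show ?case unfolding e by (rule bounded_linear_ident)
next
  case (Suc n)
  then have "bounded_linear (\<lambda>x. f ((f ^^ n) x))" by (rule bounded_linear_compose[rotated]) (use Suc in auto)
  then show ?case by (simp add: o_def)
qed

lemma funpow_commute: "(\<And>x. f (g x) = g (f x)) \<Longrightarrow> (f ^^ n) (g x) = g ((f ^^ n) x)"
  by (induction n) auto

lemma part1:
  fixes T :: "nat \<Rightarrow> 'a::real_normed_vector \<Rightarrow> 'a" and nk :: "nat \<Rightarrow> nat"
  assumes X0_dense: "closure X0 = UNIV" and nk_pos: "\<And>k. nk k > 0"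
    and i: "\<And>x i. x \<in> X0 \<Longrightarrow> i \<in> {1..N} \<Longrightarrow> (\<lambda>k. (T i ^^ nk k) x) \<longlonglongrightarrow> 0"
    and ii: "\<And>\<epsilon> K x. \<epsilon> > 0 \<Longrightarrow> (\<forall>i\<in>{1..N}. x i \<in> X0) \<Longrightarrow>
              \<exists>k\<ge>K. norm (S k x) < \<epsilon> \<and>
                     (\<forall>i\<in>{1..N}. norm ((T i ^^ nk k) (S k x) - x i) < \<epsilon>)"
  shows "strong_dbcp T N"
  unfolding strong_dbcp_def
proof (intro allI impI)
  fix L :: nat and W :: "'a set" and U :: "int \<Rightarrow> 'a set"
  assume L: "L \<ge> 1" and W: "open W" "0 \<in> W" and U: "\<forall>l\<in>{1 - int L..int N}. open (U l) \<and> U l \<noteq> {}"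
  define xs where "xs l = (SOME z. z \<in> X0 \<and> z \<in> U l)" for l
  have xs: "xs l \<in> X0 \<and> xs l \<in> U l" if "l \<in> {1 - int L..int N}" for l
  proof -
    have "\<exists>z. z \<in> X0 \<and> z \<in> U l" using open_ne_X0[OF X0_dense, of "U l"] U that by blast
    then show ?thesis unfolding xs_def by (rule someI_ex)
  qed
  obtain e0 where e0: "e0 > 0" "ball 0 e0 \<subseteq> W" using W unfolding open_contains_ball by blast
  have ev: "eventually (\<lambda>k. \<forall>l\<in>{1 - int L..0}. \<forall>i\<in>{1..N}. norm ((T i ^^ nk k) (xs l)) < e0) sequentially"
  proof -
    have "\<forall>l\<in>{1 - int L..0}. eventually (\<lambda>k. \<forall>i\<in>{1..N}. norm ((T i ^^ nk k) (xs l)) < e0) sequentially"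
    proof
      fix l assume l: "l \<in> {1 - int L..0}"
      have "\<forall>i\<in>{1..N}. eventually (\<lambda>k. norm ((T i ^^ nk k) (xs l)) < e0) sequentially"
      proof
        fix i assume iN: "i \<in> {1..N}"
        have "xs l \<in> X0" using xs[of l] l by auto
        then have "(\<lambda>k. (T i ^^ nk k) (xs l)) \<longlonglongrightarrow> 0" using i iN by blast
        then have "(\<lambda>k. norm ((T i ^^ nk k) (xs l))) \<longlonglongrightarrow> 0" using tendsto_norm_zero by blast
        then show "eventually (\<lambda>k. norm ((T i ^^ nk k) (xs l)) < e0) sequentially"
          using e0(1) order_tendstoD(2) by fastforce
      qed
      then show "eventually (\<lambda>k. \<forall>i\<in>{1..N}. norm ((T i ^^ nk k) (xs l)) < e0) sequentially"
        by (rule eventually_ball_finite[rotated]) simp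
    qed
    then show ?thesis by (rule eventually_ball_finite[rotated]) simp
  qed
  then obtain K where K: "\<And>k. k \<ge> K \<Longrightarrow> \<forall>l\<in>{1 - int L..0}. \<forall>i\<in>{1..N}. norm ((T i ^^ nk k) (xs l)) < e0"
    using ev unfolding eventually_sequentially by blast
  have rex: "\<forall>i\<in>{1..N}. \<exists>r>0. ball (xs (int i)) r \<subseteq> U (int i)"
  proof
    fix i assume "i \<in> {1..N}"
    then have "int i \<in> {1 - int L..int N}" by auto
    then have "open (U (int i))" "xs (int i) \<in> U (int i)" using xs U by auto
    then show "\<exists>r>0. ball (xs (int i)) r \<subseteq> U (int i)" unfolding open_contains_ball by blast
  qed
  obtain r where r0: "\<forall>i\<in>{1..N}. r i > 0 \<and> ball (xs (int i)) (r i) \<subseteq> U (int i)"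
    using bchoice[OF rex] by blast
  then have r: "\<And>i. i \<in> {1..N} \<Longrightarrow> r i > 0 \<and> ball (xs (int i)) (r i) \<subseteq> U (int i)" by blast
  define \<rho> where "\<rho> = Min (insert e0 (r ` {1..N}))"
  have \<rho>: "\<rho> > 0" "\<rho> \<le> e0" "\<And>i. i \<in> {1..N} \<Longrightarrow> \<rho> \<le> r i"
  proof -
    have fin: "finite (insert e0 (r ` {1..N}))" by simp
    show "\<rho> > 0" unfolding \<rho>_def using r e0 by (subst Min_gr_iff[OF fin]) auto
    show "\<rho> \<le> e0" unfolding \<rho>_def using fin by (rule Min_le) simp
    show "\<And>i. i \<in> {1..N} \<Longrightarrow> \<rho> \<le> r i" unfolding \<rho>_def using fin by (intro Min_le) auto
  qed
  have "\<forall>i\<in>{1..N}. (\<lambda>i. xs (int i)) i \<in> X0"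
    using xs by auto
  then obtain k where k: "k \<ge> K" "norm (S k (\<lambda>i. xs (int i))) < \<rho>"
     "\<forall>i\<in>{1..N}. norm ((T i ^^ nk k) (S k (\<lambda>i. xs (int i))) - xs (int i)) < \<rho>"
    using ii[where K=K and x="\<lambda>i. xs (int i)", OF \<rho>(1)] \<open>\<forall>i\<in>{1..N}. (\<lambda>i. xs (int i)) i \<in> X0\<close> by blast
  show "\<exists>n\<ge>1. W \<inter> (\<Inter>i\<in>{1..N}. (T i ^^ n) -` U (int i)) \<noteq> {} \<and>
          (\<forall>l\<in>{1 - int L..0}. U l \<inter> (\<Inter>i\<in>{1..N}. (T i ^^ n) -` W) \<noteq> {})"
  proof -
    have n1: "nk k \<ge> 1" using nk_pos[of k] by simp
    let ?w = "S k (\<lambda>i. xs (int i))"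
    have "?w \<in> ball 0 e0" using k(2) \<rho>(2) by (simp add: dist_norm)
    then have "?w \<in> W" using e0(2) by blast
    moreover have "\<forall>i\<in>{1..N}. (T i ^^ nk k) ?w \<in> U (int i)"
    proof
      fix i assume iN: "i \<in> {1..N}"
      have "norm ((T i ^^ nk k) ?w - xs (int i)) < \<rho>" using k(3) iN by blast
      then have "dist (xs (int i)) ((T i ^^ nk k) ?w) < r i"
        using \<rho>(3)[OF iN] by (simp add: dist_norm norm_minus_commute)
      then have "(T i ^^ nk k) ?w \<in> ball (xs (int i)) (r i)" by simp
      then show "(T i ^^ nk k) ?w \<in> U (int i)" using r[OF iN] by blast
    qed
    ultimately have A: "W \<inter> (\<Inter>i\<in>{1..N}. (T i ^^ nk k) -` U (int i)) \<noteq> {}" by blast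
    have B: "U l \<inter> (\<Inter>i\<in>{1..N}. (T i ^^ nk k) -` W) \<noteq> {}" if l: "l \<in> {1 - int L..0}" for l
    proof -
      have "xs l \<in> U l" using xs l by auto
      moreover have "\<forall>i\<in>{1..N}. (T i ^^ nk k) (xs l) \<in> W"
      proof
        fix i assume iN: "i \<in> {1..N}"
        have "norm ((T i ^^ nk k) (xs l)) < e0" using K[OF k(1)] l iN by blast
        then have "(T i ^^ nk k) (xs l) \<in> ball 0 e0" by (simp add: dist_norm)
        then show "(T i ^^ nk k) (xs l) \<in> W" using e0(2) by blast
      qed
      ultimately show ?thesis by blast
    qed
    show ?thesis using n1 A B by blast
  qed
qed



lemma dense_meets:
  fixes S :: "'b::topological_space set"
  assumes "\<And>U. open U \<Longrightarrow> U \<noteq> {} \<Longrightarrow> U \<inter> S \<noteq> {}"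
  shows "closure S = UNIV"
proof (rule ccontr)
  assume "closure S \<noteq> UNIV"
  then have "open (- closure S)" "- closure S \<noteq> {}" by auto
  then have "(- closure S) \<inter> S \<noteq> {}" using assms by blast
  then show False using closure_subset by blast
qed

lemma dhc_map:
  fixes T :: "nat \<Rightarrow> 'a::topological_space \<Rightarrow> 'a" and A :: "'a \<Rightarrow> 'a"
  assumes y: "d_hypercyclic T N y" and cA: "continuous_on UNIV A" and sA: "surj A"
    and com: "\<And>i n x. i \<in> {1..N} \<Longrightarrow> (T i ^^ n) (A x) = A ((T i ^^ n) x)"
  shows "d_hypercyclic T N (A y)"
  unfolding d_hypercyclic_def
proof (intro allI impI)
  fix V :: "nat \<Rightarrow> 'a set" assume V: "\<forall>i\<in>{1..N}. open (V i) \<and> V i \<noteq> {}"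
  have pre: "\<forall>i\<in>{1..N}. open (A -` V i) \<and> A -` V i \<noteq> {}"
  proof
    fix i assume "i \<in> {1..N}"
    then have o: "open (V i)" and ne: "V i \<noteq> {}" using V by auto
    have "open (A -` V i)" using open_vimage[OF o cA] .
    moreover obtain v where "v \<in> V i" using ne by auto
    moreover obtain z where "v = A z" using sA by (metis surjD)
    ultimately show "open (A -` V i) \<and> A -` V i \<noteq> {}" by auto
  qed
  then obtain n where n: "\<forall>i\<in>{1..N}. (T i ^^ n) y \<in> A -` V i"
    using y[unfolded d_hypercyclic_def, THEN spec[where x="\<lambda>i. A -` V i"]] pre by auto
  have "\<forall>i\<in>{1..N}. (T i ^^ n) (A y) \<in> V i"
  proof
    fix i assume iN: "i \<in> {1..N}"
    then have "A ((T i ^^ n) y) \<in> V i" using n by blast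
    then show "(T i ^^ n) (A y) \<in> V i" using com[OF iN] by simp
  qed
  then show "\<exists>n. \<forall>i\<in>{1..N}. (T i ^^ n) (A y) \<in> V i" by blast
qed

lemma scal_alg:
  fixes Jc :: "'a::real_vector \<Rightarrow> 'a" and ap bp aj bj :: real
  assumes lin: "linear Jc" and cs: "(bp = 0 \<and> bj = 0) \<or> (\<forall>x. Jc (Jc x) = - x)"
    and s: "ap^2 + bp^2 \<noteq> 0"
  shows "ap *\<^sub>R (((ap*aj + bp*bj)/(ap^2+bp^2)) *\<^sub>R w + ((ap*bj - bp*aj)/(ap^2+bp^2)) *\<^sub>R Jc w)
        + bp *\<^sub>R Jc (((ap*aj + bp*bj)/(ap^2+bp^2)) *\<^sub>R w + ((ap*bj - bp*aj)/(ap^2+bp^2)) *\<^sub>R Jc w)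
        = aj *\<^sub>R w + bj *\<^sub>R Jc w"
proof -
  define \<alpha> where "\<alpha> = (ap*aj + bp*bj)/(ap^2+bp^2)"
  define \<beta> where "\<beta> = (ap*bj - bp*aj)/(ap^2+bp^2)"
  have JJ: "Jc (\<alpha> *\<^sub>R w + \<beta> *\<^sub>R Jc w) = \<alpha> *\<^sub>R Jc w + \<beta> *\<^sub>R Jc (Jc w)"
    using lin by (simp add: linear_add linear_scale)
  show ?thesis
  proof (cases "bp = 0 \<and> bj = 0")
    case True
    then have "ap \<noteq> 0" using s by auto
    then have "ap * \<alpha> = aj" "\<beta> = 0" using True unfolding \<alpha>_def \<beta>_def by (auto simp: power2_eq_square)
    then show ?thesis using True unfolding \<alpha>_def[symmetric] \<beta>_def[symmetric] by simp
  next
    case False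
    then have J2: "Jc (Jc w) = - w" using cs by auto
    define q where "q = ap^2+bp^2"
    have q: "q \<noteq> 0" using s unfolding q_def .
    have ad: "\<alpha> = (ap*aj + bp*bj)/q" "\<beta> = (ap*bj - bp*aj)/q" unfolding \<alpha>_def \<beta>_def q_def by auto
    have n1: "ap*(ap*aj + bp*bj) - bp*(ap*bj - bp*aj) = aj * q" unfolding q_def by (simp add: algebra_simps power2_eq_square)
    have n2: "ap*(ap*bj - bp*aj) + bp*(ap*aj + bp*bj) = bj * q" unfolding q_def by (simp add: algebra_simps power2_eq_square)
    have c1: "ap * \<alpha> - bp * \<beta> = aj"
    proof -
      have "ap * \<alpha> - bp * \<beta> = (ap*(ap*aj + bp*bj) - bp*(ap*bj - bp*aj)) / q"
        unfolding ad using q by (simp add: field_simps)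
      then show ?thesis unfolding n1 using q by simp
    qed
    have c2: "ap * \<beta> + bp * \<alpha> = bj"
    proof -
      have "ap * \<beta> + bp * \<alpha> = (ap*(ap*bj - bp*aj) + bp*(ap*aj + bp*bj)) / q"
        unfolding ad using q by (simp add: field_simps)
      then show ?thesis unfolding n2 using q by simp
    qed
    have "ap *\<^sub>R (\<alpha> *\<^sub>R w + \<beta> *\<^sub>R Jc w) + bp *\<^sub>R Jc (\<alpha> *\<^sub>R w + \<beta> *\<^sub>R Jc w)
        = (ap * \<alpha> - bp * \<beta>) *\<^sub>R w + (ap * \<beta> + bp * \<alpha>) *\<^sub>R Jc w"
      unfolding JJ J2 by (simp add: algebra_simps)
    then show ?thesis unfolding \<alpha>_def[symmetric] \<beta>_def[symmetric] c1 c2 .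
  qed
qed

lemma scal_surj:
  fixes Jc :: "'a::real_vector \<Rightarrow> 'a" and ap bp aj bj :: real
  assumes lin: "linear Jc" and cs: "bp = 0 \<or> (\<forall>x. Jc (Jc x) = - x)"
    and s: "ap^2 + bp^2 \<noteq> 0"
  shows "surj (\<lambda>v. ap *\<^sub>R v + bp *\<^sub>R Jc v)"
proof (rule surjI)
  fix w
  define z where "z = (ap/(ap^2+bp^2)) *\<^sub>R w - (bp/(ap^2+bp^2)) *\<^sub>R Jc w"
  have Jz: "Jc z = (ap/(ap^2+bp^2)) *\<^sub>R Jc w - (bp/(ap^2+bp^2)) *\<^sub>R Jc (Jc w)"
    unfolding z_def using lin by (simp add: linear_diff linear_scale)
  show "ap *\<^sub>R z + bp *\<^sub>R Jc z = w"
  proof (cases "bp = 0")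
    case True
    then have "ap \<noteq> 0" using s by auto
    then show ?thesis using True unfolding z_def by (simp add: power2_eq_square)
  next
    case False
    then have J2: "Jc (Jc w) = - w" using cs by auto
    have e1: "ap *\<^sub>R z + bp *\<^sub>R Jc z = ((ap*ap + bp*bp)/(ap^2+bp^2)) *\<^sub>R w"
      unfolding Jz J2 by (simp add: z_def algebra_simps add_divide_distrib)
    have e2: "(ap*ap + bp*bp)/(ap^2+bp^2) = 1" using s by (simp add: power2_eq_square)
    show ?thesis unfolding e1 e2 by simp
  qed
qed



definition reqf :: "(nat \<Rightarrow> 'a::real_normed_vector \<Rightarrow> 'a) \<Rightarrow> ('a \<Rightarrow> 'a) \<Rightarrow> nat \<Rightarrow> nat \<Rightarrow> nat \<Rightarrow> nat \<Rightarrow> 'a \<Rightarrow> (nat \<Rightarrow> 'a) \<Rightarrow> real" where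
  "reqf T Jc p m n i y u = norm ((T i ^^ n) (u p) - y) +
     real m * (\<Sum>j<p. norm ((T i ^^ n) (u j)) + norm ((T i ^^ n) (Jc (u j))))"

lemma cont_coord:
  fixes g :: "'a::real_normed_vector \<Rightarrow> 'a"
  assumes "bounded_linear g"
  shows "continuous_on UNIV (\<lambda>u::nat \<Rightarrow> 'a. g (u j))"
proof -
  have c: "continuous_on UNIV (\<lambda>u::nat \<Rightarrow> 'a. u j)" by simp
  show ?thesis using continuous_on_compose2[OF linear_continuous_on[OF assms, of UNIV] c] by simp
qed

lemma open_req:
  fixes T :: "nat \<Rightarrow> 'a::real_normed_vector \<Rightarrow> 'a"
  assumes bl: "\<And>i. i \<in> {1..N} \<Longrightarrow> bounded_linear (T i)" and bJ: "bounded_linear Jc"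
  shows "open {u. \<exists>n. \<forall>i\<in>{1..N}. reqf T Jc p m n i (y i) u < \<delta>}"
proof -
  have eq: "{u. \<exists>n. \<forall>i\<in>{1..N}. reqf T Jc p m n i (y i) u < \<delta>} =
      (\<Union>n. \<Inter>i\<in>{1..N}. {u. reqf T Jc p m n i (y i) u < \<delta>})" by auto
  have op: "open {u. reqf T Jc p m n i (y i) u < \<delta>}" if "i\<in>{1..N}" for n i
  proof -
    have b: "bounded_linear (T i ^^ n)" using bl_funpow bl that by blast
    have bJ': "bounded_linear (\<lambda>x. (T i ^^ n) (Jc x))" using bounded_linear_compose[OF b bJ] .
    have c1: "continuous_on UNIV (\<lambda>u::nat \<Rightarrow> 'a. (T i ^^ n) (u j))" for j using cont_coord[OF b] .
    have c2: "continuous_on UNIV (\<lambda>u::nat \<Rightarrow> 'a. (T i ^^ n) (Jc (u j)))" for j using cont_coord[OF bJ'] .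
    have "continuous_on UNIV (reqf T Jc p m n i (y i))"
      unfolding reqf_def
      by (intro continuous_intros c1 c2)
    then show ?thesis by (rule open_Collect_less[OF _ continuous_on_const])
  qed
  show ?thesis unfolding eq by (intro open_UN ballI open_INT) (auto intro: op)
qed

lemma fun_open_basis: fixes U :: "(nat \<Rightarrow> 'a::real_normed_vector) set" assumes "open U" "u \<in> U"
  shows "\<exists>X. u \<in> PiE UNIV X \<and> (\<forall>i. open (X i)) \<and> PiE UNIV X \<subseteq> U"
proof -
  have "openin (product_topology (\<lambda>i. euclidean) UNIV) U" using assms(1) by (simp add: euclidean_product_topology)
  from product_topology_open_contains_basis[OF this assms(2)]
  obtain X where X: "u \<in> PiE UNIV X" "\<forall>i. openin euclidean (X i)" "PiE UNIV X \<subseteq> U" by auto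
  moreover have "\<forall>i. open (X i)" using calculation(2) open_openin by blast
  ultimately show ?thesis by blast
qed

lemma aux4: "0 < \<delta> \<Longrightarrow> A \<le> B + (C + D) \<Longrightarrow> B + E < \<delta>/4 \<Longrightarrow> C < \<delta>/4 \<Longrightarrow> D < \<delta>/4 \<Longrightarrow> A + E < (\<delta>::real)"
  by linarith

lemma dense_req:
  fixes T :: "nat \<Rightarrow> 'a::real_normed_vector \<Rightarrow> 'a" and Jc :: "'a \<Rightarrow> 'a"
    and U :: "(nat \<Rightarrow> 'a) set"
  assumes X0_dense: "closure X0 = UNIV"
    and bJ: "bounded_linear Jc"
    and com: "\<And>i x. i \<in> {1..N} \<Longrightarrow> T i (Jc x) = Jc (T i x)"
    and bl: "\<And>i. i \<in> {1..N} \<Longrightarrow> bounded_linear (T i)"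
    and i: "\<And>x i. x \<in> X0 \<Longrightarrow> i \<in> {1..N} \<Longrightarrow> (\<lambda>k. (T i ^^ nk k) x) \<longlonglongrightarrow> 0"
    and ii: "\<And>\<epsilon> K x. \<epsilon> > 0 \<Longrightarrow> (\<forall>i\<in>{1..N}. x i \<in> X0) \<Longrightarrow>
              \<exists>k\<ge>K. norm (S k x) < \<epsilon> \<and>
                     (\<forall>i\<in>{1..N}. norm ((T i ^^ nk k) (S k x) - x i) < \<epsilon>)"
    and \<delta>: "\<delta> > 0"
    and U: "open U" "U \<noteq> {}"
  shows "U \<inter> {u. \<exists>n. \<forall>i\<in>{1..N}. reqf T Jc p m n i (y i) u < \<delta>} \<noteq> {}"
proof -
  obtain u where uU: "u \<in> U" using U by auto
  obtain X where X: "u \<in> PiE UNIV X" "\<forall>i. open (X i)" "PiE UNIV X \<subseteq> U" using fun_open_basis[OF U(1) uU] by blast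
  have Xo: "\<And>j. open (X j)" using X(2) by blast
  have uX: "\<And>j. u j \<in> X j" using X(1) by (auto simp: PiE_iff)
  have wex: "\<forall>j\<in>{..<p}. \<exists>z. z \<in> X0 \<and> z \<in> X j"
  proof
    fix j
    have "X j \<noteq> {}" using uX[of j] by auto
    then show "\<exists>z. z \<in> X0 \<and> z \<in> X j" using open_ne_X0[OF X0_dense Xo[of j]] by blast
  qed
  obtain w where w: "\<forall>j\<in>{..<p}. w j \<in> X0 \<and> w j \<in> X j" using bchoice[OF wex] by blast
  obtain \<rho> where \<rho>: "\<rho> > 0" "ball (u p) \<rho> \<subseteq> X p"
    using Xo[of p] uX[of p] unfolding open_contains_ball by blast
  obtain v where v: "v \<in> X0" "dist v (u p) < \<rho>/2" using dense_pt[OF X0_dense, of "\<rho>/2"] \<rho> by auto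
  have yex: "\<forall>i\<in>{1..N}. \<exists>z. z \<in> X0 \<and> dist z (y i) < \<delta>/4"
    using dense_pt[OF X0_dense, of "\<delta>/4"] \<delta> by auto
  obtain y' where y': "\<forall>i\<in>{1..N}. y' i \<in> X0 \<and> dist (y' i) (y i) < \<delta>/4" using bchoice[OF yex] by blast
  define g where "g i k = norm ((T i ^^ nk k) v) + real m * (\<Sum>j<p. norm ((T i ^^ nk k) (w j)) + norm ((T i ^^ nk k) (Jc (w j))))" for i k
  have evi: "\<forall>i\<in>{1..N}. eventually (\<lambda>k. g i k < \<delta>/4) sequentially"
  proof
    fix i assume iN: "i \<in> {1..N}"
    have t1: "(\<lambda>k. (T i ^^ nk k) v) \<longlonglongrightarrow> 0" using i v(1) iN by blast
    have t2: "(\<lambda>k. norm ((T i ^^ nk k) (w j)) + norm ((T i ^^ nk k) (Jc (w j)))) \<longlonglongrightarrow> 0"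
      if j: "j \<in> {..<p}" for j
    proof -
      have a: "(\<lambda>k. (T i ^^ nk k) (w j)) \<longlonglongrightarrow> 0" using i w j iN by blast
      have "(\<lambda>k. Jc ((T i ^^ nk k) (w j))) \<longlonglongrightarrow> 0" using bounded_linear.tendsto_zero[OF bJ a] .
      moreover have "(T i ^^ nk k) (Jc (w j)) = Jc ((T i ^^ nk k) (w j))" for k
        by (rule funpow_commute) (rule com[OF iN])
      ultimately have b: "(\<lambda>k. (T i ^^ nk k) (Jc (w j))) \<longlonglongrightarrow> 0" by simp
      show ?thesis using tendsto_add_zero[OF tendsto_norm_zero[OF a] tendsto_norm_zero[OF b]] .
    qed
    have ts: "(\<lambda>k. \<Sum>j<p. norm ((T i ^^ nk k) (w j)) + norm ((T i ^^ nk k) (Jc (w j)))) \<longlonglongrightarrow> 0"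
      by (rule tendsto_null_sum) (rule t2)
    have "(\<lambda>k. real m * (\<Sum>j<p. norm ((T i ^^ nk k) (w j)) + norm ((T i ^^ nk k) (Jc (w j))))) \<longlonglongrightarrow> 0"
      using tendsto_mult[OF tendsto_const ts, of "real m"] by simp
    then have "g i \<longlonglongrightarrow> 0" unfolding g_def[abs_def]
      using tendsto_add_zero[OF tendsto_norm_zero[OF t1]] by blast
    moreover have "(0::real) < \<delta>/4" using \<delta> by simp
    ultimately show "eventually (\<lambda>k. g i k < \<delta>/4) sequentially" by (rule order_tendstoD(2))
  qed
  have "eventually (\<lambda>k. \<forall>i\<in>{1..N}. g i k < \<delta>/4) sequentially"
    using evi by (rule eventually_ball_finite[rotated]) simp
  then obtain K where K: "\<And>k. k \<ge> K \<Longrightarrow> \<forall>i\<in>{1..N}. g i k < \<delta>/4"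
    unfolding eventually_sequentially by blast
  have \<epsilon>: "min (\<rho>/2) (\<delta>/4) > 0" using \<rho> \<delta> by simp
  have y'X: "\<forall>i\<in>{1..N}. y' i \<in> X0" using y' by blast
  obtain k where k: "k \<ge> K" "norm (S k y') < min (\<rho>/2) (\<delta>/4)"
    "\<forall>i\<in>{1..N}. norm ((T i ^^ nk k) (S k y') - y' i) < min (\<rho>/2) (\<delta>/4)"
    using ii[where K=K and x=y', OF \<epsilon> y'X] by blast
  define u' where "u' j = (if j < p then w j else if j = p then v + S k y' else u j)" for j
  have "u' \<in> U"
  proof -
    have "u' j \<in> X j" for j
    proof (cases "j < p")
      case True then show ?thesis using w unfolding u'_def by auto
    next
      case False
      show ?thesis
      proof (cases "j = p")
        case True
        have "dist (u p) (v + S k y') = norm ((u p - v) - S k y')" by (simp add: dist_norm algebra_simps)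
        also have "\<dots> \<le> norm (u p - v) + norm (S k y')" by (rule norm_triangle_ineq4)
        also have "\<dots> < \<rho>" using v(2) k(2) by (simp add: dist_norm norm_minus_commute)
        finally have "v + S k y' \<in> ball (u p) \<rho>" by simp
        then show ?thesis using \<rho>(2) True False unfolding u'_def by auto
      next
        case False2: False
        then show ?thesis using False uX unfolding u'_def by auto
      qed
    qed
    then have "u' \<in> PiE UNIV X" by (auto simp: PiE_iff)
    then show ?thesis using X(3) by blast
  qed
  moreover have "u' \<in> {u. \<exists>n. \<forall>i\<in>{1..N}. reqf T Jc p m n i (y i) u < \<delta>}"
  proof -
    have "\<forall>i\<in>{1..N}. reqf T Jc p m (nk k) i (y i) u' < \<delta>"
    proof
      fix i assume iN: "i \<in> {1..N}"
      have lin: "linear (T i ^^ nk k)" using bl_funpow[OF bl[OF iN]] bounded_linear.linear by blast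
      have s: "(\<Sum>j<p. norm ((T i ^^ nk k) (u' j)) + norm ((T i ^^ nk k) (Jc (u' j))))
           = (\<Sum>j<p. norm ((T i ^^ nk k) (w j)) + norm ((T i ^^ nk k) (Jc (w j))))"
        by (rule sum.cong) (auto simp: u'_def)
      have up: "u' p = v + S k y'" by (simp add: u'_def)
      have e1: "(T i ^^ nk k) (u' p) - y i = (T i ^^ nk k) v + (((T i ^^ nk k) (S k y') - y' i) + (y' i - y i))"
        unfolding up using linear_add[OF lin] by simp
      have "norm ((T i ^^ nk k) (u' p) - y i) \<le> norm ((T i ^^ nk k) v) + norm (((T i ^^ nk k) (S k y') - y' i) + (y' i - y i))"
        unfolding e1 by (rule norm_triangle_ineq)
      also have "\<dots> \<le> norm ((T i ^^ nk k) v) + (norm ((T i ^^ nk k) (S k y') - y' i) + norm (y' i - y i))"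
        using norm_triangle_ineq[of "(T i ^^ nk k) (S k y') - y' i" "y' i - y i"] by linarith
      finally have tri: "norm ((T i ^^ nk k) (u' p) - y i) \<le> norm ((T i ^^ nk k) v) + (norm ((T i ^^ nk k) (S k y') - y' i) + norm (y' i - y i))" .
      have a: "g i k < \<delta>/4" using K[OF k(1)] iN by blast
      have b: "norm ((T i ^^ nk k) (S k y') - y' i) < \<delta>/4" using k(3) iN by auto
      have c: "norm (y' i - y i) < \<delta>/4" using y' iN by (auto simp: dist_norm)
      show "reqf T Jc p m (nk k) i (y i) u' < \<delta>"
        unfolding reqf_def s by (rule aux4[OF \<delta> tri a[unfolded g_def] b c])
    qed
    then show ?thesis by blast
  qed
  ultimately show ?thesis by blast
qed



lemma fun_open_basis2: fixes U :: "(nat \<Rightarrow> 'a::real_normed_vector) set" assumes "open U" "u \<in> U"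
  shows "\<exists>X. u \<in> PiE UNIV X \<and> (\<forall>i. open (X i)) \<and> finite {i. X i \<noteq> UNIV} \<and> PiE UNIV X \<subseteq> U"
proof -
  have "openin (product_topology (\<lambda>i. euclidean) UNIV) U" using assms(1) by (simp add: euclidean_product_topology)
  from product_topology_open_contains_basis[OF this assms(2)]
  obtain X where X: "u \<in> PiE UNIV X" "\<forall>i. openin euclidean (X i)" "finite {i. X i \<noteq> topspace euclidean}" "PiE UNIV X \<subseteq> U" by auto
  moreover have "\<forall>i. open (X i)" using X(2) open_openin by blast
  moreover have "finite {i. X i \<noteq> UNIV}" using X(3) by simp
  ultimately show ?thesis by blast
qed

lemma sum_restrict:
  fixes f :: "nat \<Rightarrow> 'b::comm_monoid_add"
  assumes "P \<le> R"
  shows "(\<Sum>j<R. if j < P then f j else 0) = (\<Sum>j<P. f j)"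
proof -
  have "(\<Sum>j<R. if j < P then f j else 0) = (\<Sum>j\<in>{..<R} \<inter> {j. j < P}. f j)"
    by (simp add: sum.inter_restrict)
  also have "{..<R} \<inter> {j. j < P} = {..<P}" using assms by auto
  finally show ?thesis .
qed

lemma M_subspace:
  fixes u :: "nat \<Rightarrow> 'a::real_vector" and Jc :: "'a \<Rightarrow> 'a"
  shows "subspace {x. \<exists>P a b. x = (\<Sum>j<P. a j *\<^sub>R u j + b j *\<^sub>R Jc (u j))}"
  unfolding subspace_def
proof (intro conjI ballI allI)
  let ?M = "{x. \<exists>P a b. x = (\<Sum>j<P. a j *\<^sub>R u j + b j *\<^sub>R Jc (u j))}"
  show "0 \<in> ?M" by (rule CollectI, rule exI[where x=0]) simp
  fix x y assume "x \<in> ?M" "y \<in> ?M"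
  then obtain P a b Q a' b' where x: "x = (\<Sum>j<P. a j *\<^sub>R u j + b j *\<^sub>R Jc (u j))"
    and y: "y = (\<Sum>j<Q. a' j *\<^sub>R u j + b' j *\<^sub>R Jc (u j))" by blast
  define A where "A j = (if j < P then a j else 0) + (if j < Q then a' j else 0)" for j
  define B where "B j = (if j < P then b j else 0) + (if j < Q then b' j else 0)" for j
  have "(\<Sum>j<P+Q. A j *\<^sub>R u j + B j *\<^sub>R Jc (u j))
     = (\<Sum>j<P+Q. (if j < P then a j *\<^sub>R u j + b j *\<^sub>R Jc (u j) else 0)
               + (if j < Q then a' j *\<^sub>R u j + b' j *\<^sub>R Jc (u j) else 0))"
    by (rule sum.cong) (auto simp: A_def B_def algebra_simps)
  also have "\<dots> = (\<Sum>j<P+Q. (if j < P then a j *\<^sub>R u j + b j *\<^sub>R Jc (u j) else 0))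
               + (\<Sum>j<P+Q. (if j < Q then a' j *\<^sub>R u j + b' j *\<^sub>R Jc (u j) else 0))"
    by (rule sum.distrib)
  also have "\<dots> = x + y"
    unfolding sum_restrict[OF le_add1] sum_restrict[OF le_add2] x y ..
  finally have "x + y = (\<Sum>j<P+Q. A j *\<^sub>R u j + B j *\<^sub>R Jc (u j))" by simp
  then show "x + y \<in> ?M" by (intro CollectI exI)
next
  let ?M = "{x. \<exists>P a b. x = (\<Sum>j<P. a j *\<^sub>R u j + b j *\<^sub>R Jc (u j))}"
  fix c :: real and x assume "x \<in> ?M"
  then obtain P a b where x: "x = (\<Sum>j<P. a j *\<^sub>R u j + b j *\<^sub>R Jc (u j))" by blast
  have "c *\<^sub>R x = (\<Sum>j<P. (c * a j) *\<^sub>R u j + (c * b j) *\<^sub>R Jc (u j))"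
    unfolding x by (simp add: scaleR_sum_right scaleR_add_right)
  then show "c *\<^sub>R x \<in> ?M" by (intro CollectI exI)
qed

lemma M_J:
  fixes u :: "nat \<Rightarrow> 'a::real_vector" and Jc :: "'a \<Rightarrow> 'a"
  assumes lin: "linear Jc" and JJ: "\<forall>x. Jc (Jc x) = - x"
  shows "Jc ` {x. \<exists>P a b. x = (\<Sum>j<P. a j *\<^sub>R u j + b j *\<^sub>R Jc (u j))}
     \<subseteq> {x. \<exists>P a b. x = (\<Sum>j<P. a j *\<^sub>R u j + b j *\<^sub>R Jc (u j))}"
proof
  fix z assume "z \<in> Jc ` {x. \<exists>P a b. x = (\<Sum>j<P. a j *\<^sub>R u j + b j *\<^sub>R Jc (u j))}"
  then obtain P a b where z: "z = Jc (\<Sum>j<P. a j *\<^sub>R u j + b j *\<^sub>R Jc (u j))" by blast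
  have "z = (\<Sum>j<P. (- b j) *\<^sub>R u j + a j *\<^sub>R Jc (u j))"
    unfolding z using lin JJ by (simp add: linear_sum linear_add linear_scale)
  then show "z \<in> {x. \<exists>P a b. x = (\<Sum>j<P. a j *\<^sub>R u j + b j *\<^sub>R Jc (u j))}" by (intro CollectI exI)
qed

lemma reqs_dhc:
  fixes T :: "nat \<Rightarrow> 'a::real_normed_vector \<Rightarrow> 'a" and dd :: "nat \<Rightarrow> 'a"
  assumes dense: "closure (range dd) = UNIV"
   and bl: "\<And>i. i \<in> {1..N} \<Longrightarrow> bounded_linear (T i)"
   and req: "\<And>ys r. \<exists>n. \<forall>i\<in>{1..N}. reqf T Jc p m n i (dd (ys ! i)) u < 1 / real (Suc r)"
   and al: "\<And>j. j < p \<Longrightarrow> \<bar>\<alpha> j\<bar> \<le> real m" and be: "\<And>j. j < p \<Longrightarrow> \<bar>\<beta> j\<bar> \<le> real m"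
  shows "d_hypercyclic T N (u p + (\<Sum>j<p. \<alpha> j *\<^sub>R u j + \<beta> j *\<^sub>R Jc (u j)))"
  unfolding d_hypercyclic_def
proof (intro allI impI)
  let ?x = "u p + (\<Sum>j<p. \<alpha> j *\<^sub>R u j + \<beta> j *\<^sub>R Jc (u j))"
  fix V :: "nat \<Rightarrow> 'a set" assume V: "\<forall>i\<in>{1..N}. open (V i) \<and> V i \<noteq> {}"
  have cex: "\<forall>i\<in>{1..N}. \<exists>c. \<exists>\<rho>>0. ball c \<rho> \<subseteq> V i"
  proof
    fix i assume "i\<in>{1..N}"
    then have o: "open (V i)" and ne: "V i \<noteq> {}" using V by auto
    then obtain c where c: "c \<in> V i" by blast
    then show "\<exists>c. \<exists>\<rho>>0. ball c \<rho> \<subseteq> V i" using o unfolding open_contains_ball by blast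
  qed
  obtain c where c: "\<forall>i\<in>{1..N}. \<exists>\<rho>>0. ball (c i) \<rho> \<subseteq> V i" using bchoice[OF cex] by blast
  obtain \<rho> where \<rho>: "\<forall>i\<in>{1..N}. \<rho> i > 0 \<and> ball (c i) (\<rho> i) \<subseteq> V i" using bchoice[OF c] by blast
  define \<rho>0 where "\<rho>0 = Min (insert 1 (\<rho> ` {1..N}))"
  have fin: "finite (insert 1 (\<rho> ` {1..N}))" by simp
  have \<rho>0: "\<rho>0 > 0" unfolding \<rho>0_def using \<rho> by (subst Min_gr_iff[OF fin]) auto
  have \<rho>0i: "\<rho>0 \<le> \<rho> i" if "i \<in> {1..N}" for i unfolding \<rho>0_def using fin that by (intro Min_le) auto
  have qex: "\<forall>i\<in>{1..N}. \<exists>q. dist (dd q) (c i) < \<rho>0/2"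
  proof
    fix i
    obtain z where "z \<in> range dd" "dist z (c i) < \<rho>0/2" using dense_pt[OF dense, of "\<rho>0/2" "c i"] \<rho>0 by auto
    then show "\<exists>q. dist (dd q) (c i) < \<rho>0/2" by auto
  qed
  obtain q where q: "\<forall>i\<in>{1..N}. dist (dd (q i)) (c i) < \<rho>0/2" using bchoice[OF qex] by blast
  obtain r where r: "inverse (real (Suc r)) < \<rho>0/2" using reals_Archimedean[of "\<rho>0/2"] \<rho>0 by auto
  define ys where "ys = map q [0..<Suc N]"
  have ys: "ys ! i = q i" if "i \<in> {1..N}" for i unfolding ys_def using that
    by (simp del: upt_Suc)
  obtain n where n: "\<forall>i\<in>{1..N}. reqf T Jc p m n i (dd (ys ! i)) u < 1 / real (Suc r)" using req by blast
  show "\<exists>n. \<forall>i\<in>{1..N}. (T i ^^ n) ?x \<in> V i"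
  proof (intro exI ballI)
    fix i assume iN: "i \<in> {1..N}"
    let ?L = "T i ^^ n"
    have lin: "linear ?L" using bl_funpow[OF bl[OF iN]] bounded_linear.linear by blast
    have ex: "?L ?x = ?L (u p) + (\<Sum>j<p. \<alpha> j *\<^sub>R ?L (u j) + \<beta> j *\<^sub>R ?L (Jc (u j)))"
      using lin by (simp add: linear_add linear_sum linear_scale)
    have "norm (\<Sum>j<p. \<alpha> j *\<^sub>R ?L (u j) + \<beta> j *\<^sub>R ?L (Jc (u j))) \<le> (\<Sum>j<p. norm (\<alpha> j *\<^sub>R ?L (u j) + \<beta> j *\<^sub>R ?L (Jc (u j))))"
      by (rule norm_sum)
    also have "\<dots> \<le> (\<Sum>j<p. real m * (norm (?L (u j)) + norm (?L (Jc (u j)))))"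
    proof (rule sum_mono)
      fix j assume "j \<in> {..<p}"
      then have a1: "\<bar>\<alpha> j\<bar> \<le> real m" and b1: "\<bar>\<beta> j\<bar> \<le> real m" using al be by auto
      have "norm (\<alpha> j *\<^sub>R ?L (u j) + \<beta> j *\<^sub>R ?L (Jc (u j))) \<le> \<bar>\<alpha> j\<bar> * norm (?L (u j)) + \<bar>\<beta> j\<bar> * norm (?L (Jc (u j)))"
        using norm_triangle_ineq[of "\<alpha> j *\<^sub>R ?L (u j)" "\<beta> j *\<^sub>R ?L (Jc (u j))"] by simp
      also have "\<dots> \<le> real m * norm (?L (u j)) + real m * norm (?L (Jc (u j)))"
        by (intro add_mono mult_right_mono a1 b1 norm_ge_zero)
      finally show "norm (\<alpha> j *\<^sub>R ?L (u j) + \<beta> j *\<^sub>R ?L (Jc (u j))) \<le> real m * (norm (?L (u j)) + norm (?L (Jc (u j))))"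
        by (simp add: distrib_left)
    qed
    also have "\<dots> = real m * (\<Sum>j<p. norm (?L (u j)) + norm (?L (Jc (u j))))" by (simp add: sum_distrib_left)
    finally have sb: "norm (\<Sum>j<p. \<alpha> j *\<^sub>R ?L (u j) + \<beta> j *\<^sub>R ?L (Jc (u j))) \<le> real m * (\<Sum>j<p. norm (?L (u j)) + norm (?L (Jc (u j))))" .
    have e2: "?L ?x - dd (q i) = (?L (u p) - dd (q i)) + (\<Sum>j<p. \<alpha> j *\<^sub>R ?L (u j) + \<beta> j *\<^sub>R ?L (Jc (u j)))"
      unfolding ex by simp
    have tri: "norm (?L ?x - dd (q i)) \<le> norm (?L (u p) - dd (q i)) + norm (\<Sum>j<p. \<alpha> j *\<^sub>R ?L (u j) + \<beta> j *\<^sub>R ?L (Jc (u j)))"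
      unfolding e2 by (rule norm_triangle_ineq)
    have nn: "reqf T Jc p m n i (dd (q i)) u < 1 / real (Suc r)" using n iN unfolding ys[OF iN, symmetric] by blast
    have "norm (?L ?x - dd (q i)) < \<rho>0/2"
      using tri sb nn r unfolding reqf_def by (simp add: inverse_eq_divide)
    moreover have "dist (dd (q i)) (c i) < \<rho>0/2" using q iN by blast
    ultimately have "dist (?L ?x) (c i) < \<rho> i"
      using dist_triangle[of "?L ?x" "c i" "dd (q i)"] \<rho>0i[OF iN] by (simp add: dist_norm)
    then have "?L ?x \<in> ball (c i) (\<rho> i)" by (simp add: dist_commute)
    then show "?L ?x \<in> V i" using \<rho> iN by blast
  qed
qed



theorem theorem2p2:
  fixes cplx :: bool and J :: "'a::banach \<Rightarrow> 'a"
    and T :: "nat \<Rightarrow> 'a \<Rightarrow> 'a" and N :: nat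
    and nk :: "nat \<Rightarrow> nat" and X0 :: "'a set"
    and S :: "nat \<Rightarrow> (nat \<Rightarrow> 'a) \<Rightarrow> 'a"
  assumes field: "cplx \<Longrightarrow> complex_structure J"
    and sep: "separable_X TYPE('a)"
    and infdim: "infinite_dimensional TYPE('a)"
    and ops: "\<And>i. i \<in> {1..N} \<Longrightarrow> K_bounded_linear cplx J (T i)"
    and N2: "N \<ge> 2"
    and nk_mono: "strict_mono nk" and nk_pos: "\<And>k. nk k > 0"
    and X0_dense: "closure X0 = UNIV"
    and i: "\<And>x i. x \<in> X0 \<Longrightarrow> i \<in> {1..N} \<Longrightarrow> (\<lambda>k. (T i ^^ nk k) x) \<longlonglongrightarrow> 0"
    and ii: "\<And>\<epsilon> K x. \<epsilon> > 0 \<Longrightarrow> (\<forall>i\<in>{1..N}. x i \<in> X0) \<Longrightarrow>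
              \<exists>k\<ge>K. norm (S k x) < \<epsilon> \<and>
                     (\<forall>i\<in>{1..N}. norm ((T i ^^ nk k) (S k x) - x i) < \<epsilon>)"
  shows "strong_dbcp T N \<and> (\<exists>M. dense_d_hypercyclic_manifold cplx J T N M)"
proof
  show "strong_dbcp T N" by (rule part1[OF X0_dense nk_pos i ii])
next
  define Jc where "Jc = (if cplx then J else (\<lambda>x::'a. 0))"
  have bJ: "bounded_linear Jc"
  proof (cases cplx)
    case True then show ?thesis using field unfolding Jc_def complex_structure_def by simp
  next
    case False then show ?thesis unfolding Jc_def by simp
  qed
  have lJ: "linear Jc" using bJ bounded_linear.linear by blast
  have bl: "\<And>i. i \<in> {1..N} \<Longrightarrow> bounded_linear (T i)" using ops unfolding K_bounded_linear_def by blast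
  have com: "T i (Jc x) = Jc (T i x)" if iN: "i \<in> {1..N}" for i x
  proof (cases cplx)
    case True then show ?thesis using ops[OF iN] unfolding Jc_def K_bounded_linear_def by simp
  next
    case False
    have "T i 0 = 0" using bl[OF iN] bounded_linear.linear linear_0 by blast
    then show ?thesis using False unfolding Jc_def by simp
  qed
  have JJ: "\<forall>x. Jc (Jc x) = - x" if cplx using field[OF that] that unfolding complex_structure_def Jc_def by simp
  have J0: "Jc = (\<lambda>x. 0)" if "\<not> cplx" using that unfolding Jc_def by simp
  obtain D :: "'a set" where D: "countable D" "closure D = UNIV" using sep unfolding separable_X_def by blast
  have Dne: "D \<noteq> {}" using D(2) by auto
  define dd where "dd = from_nat_into D"
  have rdd: "range dd = D" unfolding dd_def using Dne D(1) by simp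
  have ddense: "closure (range dd) = UNIV" using rdd D(2) by simp
  define E where "E qr = {u::nat \<Rightarrow> 'a. \<exists>j. dist (u j) (dd (fst qr)) < 1 / real (Suc (snd qr))}" for qr :: "nat \<times> nat"
  define G where "G z = {u::nat \<Rightarrow> 'a. \<exists>n. \<forall>i\<in>{1..N}. reqf T Jc (fst z) (fst (snd z)) n i (dd (fst (snd (snd z)) ! i)) u < 1 / real (Suc (snd (snd (snd z))))}"
    for z :: "nat \<times> nat \<times> nat list \<times> nat"
  define GG where "GG = range E \<union> range G"
  have cG: "countable GG" unfolding GG_def by (intro countable_Un countable_image countableI_type)
  have opE: "open (E qr)" for qr
  proof -
    have "E qr = (\<Union>j. (\<lambda>u. u j) -` ball (dd (fst qr)) (1 / real (Suc (snd qr))))"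
      unfolding E_def by (auto simp: dist_commute)
    moreover have "open ((\<lambda>u::nat \<Rightarrow> 'a. u j) -` ball (dd (fst qr)) (1 / real (Suc (snd qr))))" for j
      by (rule open_vimage[OF open_ball continuous_on_product_coordinates])
    ultimately show ?thesis by auto
  qed
  have dE: "closure (E qr) = UNIV" for qr
  proof (rule dense_meets)
    fix U :: "(nat \<Rightarrow> 'a) set" assume U: "open U" "U \<noteq> {}"
    then obtain u where uU: "u \<in> U" by blast
    obtain X where X: "u \<in> PiE UNIV X" "\<forall>i. open (X i)" "finite {i. X i \<noteq> UNIV}" "PiE UNIV X \<subseteq> U"
      using fun_open_basis2[OF U(1) uU] by blast
    obtain j where j: "j \<notin> {i. X i \<noteq> UNIV}" using ex_new_if_finite[OF infinite_UNIV_nat X(3)] by blast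
    define u' where "u' = u(j := dd (fst qr))"
    have "u' \<in> PiE UNIV X" using X(1) j unfolding u'_def by (auto simp: PiE_iff)
    then have "u' \<in> U" using X(4) by blast
    moreover have "u' \<in> E qr" unfolding E_def u'_def by (intro CollectI exI[where x=j]) simp
    ultimately show "U \<inter> E qr \<noteq> {}" by blast
  qed
  have opG: "open (G z)" for z
    unfolding G_def by (rule open_req[OF bl bJ])
  have dG: "closure (G z) = UNIV" for z
  proof (rule dense_meets)
    fix U :: "(nat \<Rightarrow> 'a) set" assume U: "open U" "U \<noteq> {}"
    have "(0::real) < 1 / real (Suc (snd (snd (snd z))))" by simp
    from dense_req[OF X0_dense bJ com bl i ii this U, of "fst z" "fst (snd z)" "\<lambda>i. dd (fst (snd (snd z)) ! i)"]
    show "U \<inter> G z \<noteq> {}" unfolding G_def by simp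
  qed
  have "euclidean closure_of \<Inter>GG = topspace euclidean"
  proof (rule Baire_category)
    show "completely_metrizable_space (euclidean :: (nat \<Rightarrow> 'a) topology) \<or>
        locally_compact_space (euclidean :: (nat \<Rightarrow> 'a) topology) \<and> regular_space (euclidean :: (nat \<Rightarrow> 'a) topology)"
      using completely_metrizable_space_euclidean by blast
    show "countable GG" by (rule cG)
    fix Z assume "Z \<in> GG"
    then have oZ: "open Z" and cZ: "closure Z = UNIV" unfolding GG_def using opE dE opG dG by blast+
    have "openin euclidean Z" using oZ open_openin by blast
    moreover have "euclidean closure_of Z = topspace euclidean" using cZ by simp
    ultimately show "openin euclidean Z \<and> euclidean closure_of Z = topspace euclidean" by blast
  qed
  then have "closure (\<Inter>GG) = UNIV" by simp
  then obtain u where u: "u \<in> \<Inter>GG" by (metis closure_empty UNIV_I empty_iff equals0I)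
  have uE: "u \<in> E qr" for qr using u unfolding GG_def by blast
  have uG: "u \<in> G z" for z using u unfolding GG_def by blast
  define M where "M = {x. \<exists>P a b. x = (\<Sum>j<P. a j *\<^sub>R u j + b j *\<^sub>R Jc (u j))}"
  have Msub: "subspace M" unfolding M_def by (rule M_subspace)
  have MJ: "J ` M \<subseteq> M" if cplx
  proof -
    have "J = Jc" using that unfolding Jc_def by simp
    then show ?thesis unfolding M_def using M_J[OF lJ JJ[OF that]] by simp
  qed
  have uM: "u j \<in> M" for j
  proof -
    have "(\<Sum>i<Suc j. (if i = j then 1 else 0) *\<^sub>R u i + 0 *\<^sub>R Jc (u i)) = u j"
      by (simp add: if_distrib cong: if_cong)
    then show ?thesis unfolding M_def by (intro CollectI exI) (rule sym)
  qed
  have Mdense: "closure M = UNIV"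
  proof -
    have "x \<in> closure M" for x
      unfolding closure_approachable
    proof (intro allI impI)
      fix e :: real assume e: "e > 0"
      obtain z where z: "z \<in> range dd" "dist z x < e/2" using dense_pt[OF ddense, of "e/2" x] e by auto
      then obtain q where q: "dist (dd q) x < e/2" by auto
      obtain r where r: "inverse (real (Suc r)) < e/2" using reals_Archimedean[of "e/2"] e by auto
      obtain j where j: "dist (u j) (dd q) < 1 / real (Suc r)" using uE[of "(q, r)"] unfolding E_def by auto
      have "dist (u j) x < e" using dist_triangle[of "u j" x "dd q"] q r j by (simp add: inverse_eq_divide)
      then show "\<exists>y\<in>M. dist y x < e" using uM by blast
    qed
    then show ?thesis by auto
  qed
  have Mhc: "d_hypercyclic T N x" if xM: "x \<in> M" and x0: "x \<noteq> 0" for x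
  proof -
    obtain P a b where x: "x = (\<Sum>j<P. a j *\<^sub>R u j + b j *\<^sub>R Jc (u j))" using xM unfolding M_def by blast
    define b' where "b' j = (if cplx then b j else 0)" for j
    have x': "x = (\<Sum>j<P. a j *\<^sub>R u j + b' j *\<^sub>R Jc (u j))"
      by (cases cplx) (simp_all add: x b'_def Jc_def)
    define Z where "Z = {j. j < P \<and> (a j \<noteq> 0 \<or> b' j \<noteq> 0)}"
    have finZ: "finite Z" unfolding Z_def by simp
    have Zne: "Z \<noteq> {}"
    proof
      assume "Z = {}"
      then have "\<forall>j<P. a j = 0 \<and> b' j = 0" unfolding Z_def by blast
      then have "x = 0" unfolding x' by simp
      then show False using x0 by simp
    qed
    define p where "p = Max Z"
    have pZ: "p \<in> Z" unfolding p_def using finZ Zne by (rule Max_in)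
    have pmax: "j \<le> p" if "j \<in> Z" for j unfolding p_def using finZ that by (rule Max_ge)
    have pP: "p < P" and pnz: "a p \<noteq> 0 \<or> b' p \<noteq> 0" using pZ unfolding Z_def by auto
    define f where "f j = a j *\<^sub>R u j + b' j *\<^sub>R Jc (u j)" for j
    have "x = (\<Sum>j<P. if j < Suc p then f j else 0)"
      unfolding x' f_def[symmetric]
    proof (rule sum.cong[OF refl])
      fix j assume "j \<in> {..<P}"
      show "f j = (if j < Suc p then f j else 0)"
      proof (cases "j < Suc p")
        case False
        then have "j \<notin> Z" using pmax by fastforce
        then have "a j = 0" "b' j = 0" using \<open>j \<in> {..<P}\<close> unfolding Z_def by auto
        then show ?thesis using False unfolding f_def by simp
      qed simp
    qed
    also have "\<dots> = (\<Sum>j<Suc p. f j)" using pP by (intro sum_restrict) simp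
    also have "\<dots> = f p + (\<Sum>j<p. f j)" by simp
    finally have xs: "x = f p + (\<Sum>j<p. f j)" .
    define s where "s = (a p)^2 + (b' p)^2"
    have s: "s \<noteq> 0" unfolding s_def using pnz by (simp add: sum_power2_eq_zero_iff)
    define \<alpha> where "\<alpha> j = (a p * a j + b' p * b' j) / ((a p)^2 + (b' p)^2)" for j
    define \<beta> where "\<beta> j = (a p * b' j - b' p * a j) / ((a p)^2 + (b' p)^2)" for j
    define A where "A v = a p *\<^sub>R v + b' p *\<^sub>R Jc v" for v
    have cs: "(b' p = 0 \<and> b' j = 0) \<or> (\<forall>x. Jc (Jc x) = - x)" for j
      by (cases cplx) (auto simp: b'_def JJ)
    have bA: "bounded_linear A" unfolding A_def
      by (intro bounded_linear_add bounded_linear_scaleR_right bounded_linear_compose[OF bounded_linear_scaleR_right bJ])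
    have lA: "linear A" using bA bounded_linear.linear by blast
    define y where "y = u p + (\<Sum>j<p. \<alpha> j *\<^sub>R u j + \<beta> j *\<^sub>R Jc (u j))"
    have Ay: "A y = x"
    proof -
      have "A y = A (u p) + (\<Sum>j<p. A (\<alpha> j *\<^sub>R u j + \<beta> j *\<^sub>R Jc (u j)))"
        unfolding y_def using lA by (simp add: linear_add linear_sum)
      also have "\<dots> = f p + (\<Sum>j<p. f j)"
      proof -
        have "A (u p) = f p" unfolding A_def f_def by simp
        moreover have "A (\<alpha> j *\<^sub>R u j + \<beta> j *\<^sub>R Jc (u j)) = f j" for j
          unfolding A_def f_def \<alpha>_def \<beta>_def by (rule scal_alg[OF lJ cs[of j]]) (use s in \<open>simp add: s_def\<close>)
        ultimately show ?thesis by simp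
      qed
      finally show ?thesis using xs by simp
    qed
    define m where "m = nat \<lceil>\<Sum>j<p. \<bar>\<alpha> j\<bar> + \<bar>\<beta> j\<bar>\<rceil>"
    have mbd: "\<bar>\<alpha> j\<bar> \<le> real m \<and> \<bar>\<beta> j\<bar> \<le> real m" if "j < p" for j
    proof -
      have "\<bar>\<alpha> j\<bar> + \<bar>\<beta> j\<bar> \<le> (\<Sum>j<p. \<bar>\<alpha> j\<bar> + \<bar>\<beta> j\<bar>)"
        using that by (intro member_le_sum) auto
      also have "\<dots> \<le> real m" unfolding m_def by (rule real_nat_ceiling_ge)
      finally have h: "\<bar>\<alpha> j\<bar> + \<bar>\<beta> j\<bar> \<le> real m" .
      then show ?thesis using abs_ge_zero[of "\<alpha> j"] abs_ge_zero[of "\<beta> j"] by linarith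
    qed
    have req: "\<exists>n. \<forall>i\<in>{1..N}. reqf T Jc p m n i (dd (ys ! i)) u < 1 / real (Suc r)" for ys r
      using uG[of "(p, m, ys, r)"] unfolding G_def by simp
    have yhc: "d_hypercyclic T N y" unfolding y_def
      by (rule reqs_dhc[OF ddense bl req]) (use mbd in auto)
    have surjA: "surj A" unfolding A_def
      by (rule scal_surj[OF lJ]) (use cs[of p] s in \<open>auto simp: s_def\<close>)
    have comA: "(T i ^^ n) (A v) = A ((T i ^^ n) v)" if iN: "i \<in> {1..N}" for i n v
    proof -
      have lin: "linear (T i ^^ n)" using bl_funpow[OF bl[OF iN]] bounded_linear.linear by blast
      have "(T i ^^ n) (Jc v) = Jc ((T i ^^ n) v)" by (rule funpow_commute) (rule com[OF iN])
      then show ?thesis unfolding A_def using lin by (simp add: linear_add linear_scale)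
    qed
    have "d_hypercyclic T N (A y)"
      by (rule dhc_map[OF yhc linear_continuous_on[OF bA] surjA comA])
    then show ?thesis using Ay by simp
  qed
  show "\<exists>M. dense_d_hypercyclic_manifold cplx J T N M"
    unfolding dense_d_hypercyclic_manifold_def K_subspace_def
    using Msub MJ Mdense Mhc by blast
qed

end
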